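(* Let $t$ be the left-hand side of a CRS rule following Barendregt's naming convention, and let $\mathit{Left}(t)=(\Delta,t')$. Then $\Delta\vdash t'$ is a closed nominal term-in-context.
   Context: CRSs: meta-terms $a\mid Z(t_1,\dots,t_n)\mid[a]t\mid f\,t\mid(t_1,\dots,t_n)$ over variables (identified with nominal atoms), meta-variables $Z$ with arities and function symbols. The left-hand side $l$ of a CRS rule is a closed meta-term (no free variables) of the form $f(s_1,\dots,s_n)$ in which every meta-variable occurs only as $Z(a_1,\dots,a_n)$ with pairwise distinct bound variables. Barendregt's convention: bound variables are pairwise distinct and distinct from free variables. Nominal terms: $a\mid\pi\cdot X\mid[a]s\mid f\,s\mid(s_1,\dots,s_n)$ with finite-support permutations $\pi$; freshness contexts are sets of $a\#X$. $\Delta\vdash t$ is closed if: (1) every atom occurrence $a$ in $t$ lies under an abstraction $[a]$; (2) if $\pi\cdot X$ is in the scope of an abstraction of $\pi(a)$ then every occurrence $\pi'\cdot X$ of $X$ in $t$ is in the scope of an abstraction of $\pi'(a)$, or $a\#X\in\Delta$; (3) for two occurrences $\pi_1\cdot X,\pi_2\cdot X$ and $a$ with $\pi_1(a)\neq\pi_2(a)$, if $a$ is not abstracted in one of the occurrences then $a\#X\in\Delta$. Translation: $\Phi_t(Z)=[a_1,\dots,a_n]$ if $Z(a_1,\dots,a_n)$ is the leftmost occurrence of $Z$ in $t$. For lists of distinct variables $[a_1,\dots,a_n],[b_1,\dots,b_n]$, $\Psi([a_1,\ldots,a_n],[b_1,\dots,b_n])$ is a permutation (list of swappings) $\pi$ with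 $\pi(a_k)=b_k$ for all $k$, obtained by closing each maximal chain of the injection $a_k\mapsto b_k$ into a cycle $(c_1,\dots,c_m)$ and decomposing it as $(c_1\ c_m)\cdots(c_1\ c_2)$. $\mathit{Left}(t)=(\Delta,t')$: $t'$ is $t$ with the leftmost occurrence of each $Z(a_1,\ldots,a_n)$ replaced by the nominal variable $Z$ and every other occurrence $Z(b_1,\dots,b_n)$ replaced by $\Psi(\Phi_t(Z),[b_1,\dots,b_n])\cdot Z$, all other constructs kept unchanged; $\Delta$ contains $b\#Z$ for every occurrence of $Z$ in $t$ and every variable $b$ abstracted above that occurrence with $b\notin\Phi_t(Z)$. *)

theory Defs
  imports Main
begin

text \<open>Atoms (= CRS variables) have type 'a, meta-variables / nominal unknowns type 'v,
function symbols type 'f.  A permutation is a list of swappings; the list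
[s1, ..., sk] denotes the composition s1 o ... o sk (the rightmost swapping acts first).\<close>

type_synonym 'a perm = "('a \<times> 'a) list"

definition swap_atom :: "'a \<times> 'a \<Rightarrow> 'a \<Rightarrow> 'a" where
  "swap_atom s c = (if c = fst s then snd s else if c = snd s then fst s else c)"

definition perm_apply :: "'a perm \<Rightarrow> 'a \<Rightarrow> 'a" where
  "perm_apply \<pi> c = foldr swap_atom \<pi> c"

datatype ('a, 'v, 'f) mterm =
    MVar 'a
  | MMeta 'v "('a, 'v, 'f) mterm list"
  | MAbs 'a "('a, 'v, 'f) mterm"
  | MFun 'f "('a, 'v, 'f) mterm"
  | MTup "('a, 'v, 'f) mterm list"

fun fvm :: "('a, 'v, 'f) mterm \<Rightarrow> 'a set" where
  "fvm (MVar a) = {a}"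
| "fvm (MMeta Z ts) = (\<Union>t\<in>set ts. fvm t)"
| "fvm (MAbs a t) = fvm t - {a}"
| "fvm (MFun f t) = fvm t"
| "fvm (MTup ts) = (\<Union>t\<in>set ts. fvm t)"

fun binders :: "('a, 'v, 'f) mterm \<Rightarrow> 'a list" where
  "binders (MVar a) = []"
| "binders (MMeta Z ts) = concat (map binders ts)"
| "binders (MAbs a t) = a # binders t"
| "binders (MFun f t) = binders t"
| "binders (MTup ts) = concat (map binders ts)"

fun meta_ok :: "('v \<Rightarrow> nat) \<Rightarrow> ('a, 'v, 'f) mterm \<Rightarrow> bool" where
  "meta_ok ar (MVar a) = True"
| "meta_ok ar (MMeta Z ts) =
     (\<exists>as. ts = map MVar as \<and> distinct as \<and> length as = ar Z)"
| "meta_ok ar (MAbs a t) = meta_ok ar t"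
| "meta_ok ar (MFun f t) = meta_ok ar t"
| "meta_ok ar (MTup ts) = (\<forall>t\<in>set ts. meta_ok ar t)"

text \<open>Left-hand side of a CRS rule (meta-variables with arity function ar).
 Closedness of the meta-term makes every argument variable of a meta-variable
 occurrence bound.\<close>
definition crs_lhs :: "('v \<Rightarrow> nat) \<Rightarrow> ('a, 'v, 'f) mterm \<Rightarrow> bool" where
  "crs_lhs ar t \<longleftrightarrow> fvm t = {} \<and> (\<exists>f ss. t = MFun f (MTup ss)) \<and> meta_ok ar t"

definition barendregt :: "('a, 'v, 'f) mterm \<Rightarrow> bool" where
  "barendregt t \<longleftrightarrow> distinct (binders t) \<and> set (binders t) \<inter> fvm t = {}"

datatype ('a, 'v, 'f) nterm =
    NAtom 'a
  | NSusp "'a perm" 'v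
  | NAbs 'a "('a, 'v, 'f) nterm"
  | NFun 'f "('a, 'v, 'f) nterm"
  | NTup "('a, 'v, 'f) nterm list"

text \<open>Freshness context: a set of pairs (a, X) standing for a # X.\<close>
type_synonym ('a, 'v) fctx = "('a \<times> 'v) set"

fun atom_occs :: "'a list \<Rightarrow> ('a, 'v, 'f) nterm \<Rightarrow> ('a \<times> 'a list) list" where
  "atom_occs bs (NAtom a) = [(a, bs)]"
| "atom_occs bs (NSusp \<pi> X) = []"
| "atom_occs bs (NAbs a t) = atom_occs (bs @ [a]) t"
| "atom_occs bs (NFun f t) = atom_occs bs t"
| "atom_occs bs (NTup ts) = concat (map (atom_occs bs) ts)"

fun susp_occs :: "'a list \<Rightarrow> ('a, 'v, 'f) nterm \<Rightarrow> ('a perm \<times> 'v \<times> 'a list) list" where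
  "susp_occs bs (NAtom a) = []"
| "susp_occs bs (NSusp \<pi> X) = [(\<pi>, X, bs)]"
| "susp_occs bs (NAbs a t) = susp_occs (bs @ [a]) t"
| "susp_occs bs (NFun f t) = susp_occs bs t"
| "susp_occs bs (NTup ts) = concat (map (susp_occs bs) ts)"

definition closed_nom :: "('a, 'v) fctx \<Rightarrow> ('a, 'v, 'f) nterm \<Rightarrow> bool" where
  "closed_nom \<Delta> t \<longleftrightarrow>
     (\<forall>(a, bs) \<in> set (atom_occs [] t). a \<in> set bs) \<and>
     (\<forall>(\<pi>, X, bs) \<in> set (susp_occs [] t). \<forall>a. perm_apply \<pi> a \<in> set bs \<longrightarrow>
        (\<forall>(\<pi>', X', bs') \<in> set (susp_occs [] t). X' = X \<longrightarrow>
            perm_apply \<pi>' a \<in> set bs' \<or> (a, X) \<in> \<Delta>)) \<and>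
     (\<forall>(\<pi>1, X1, bs1) \<in> set (susp_occs [] t). \<forall>(\<pi>2, X2, bs2) \<in> set (susp_occs [] t).
        \<forall>a. X1 = X2 \<longrightarrow> perm_apply \<pi>1 a \<noteq> perm_apply \<pi>2 a \<longrightarrow>
          (perm_apply \<pi>1 a \<notin> set bs1 \<or> perm_apply \<pi>2 a \<notin> set bs2) \<longrightarrow> (a, X1) \<in> \<Delta>)"

text \<open>Follow the injection f from c, stopping at the end of the chain or when the
 starting point c0 is reached again (cycle); n is fuel.\<close>
fun chain :: "('a \<Rightarrow> 'a option) \<Rightarrow> nat \<Rightarrow> 'a \<Rightarrow> 'a \<Rightarrow> 'a list" where
  "chain f 0 c0 c = [c]"
| "chain f (Suc n) c0 c =
     c # (case f c of None \<Rightarrow> [] | Some d \<Rightarrow> if d = c0 then [] else chain f n c0 d)"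

text \<open>The cycle (c1, ..., cm) as the list of swappings (c1 cm) ... (c1 c2).\<close>
fun cycle_swaps :: "'a list \<Rightarrow> 'a perm" where
  "cycle_swaps [] = []"
| "cycle_swaps (c1 # cs) = map (\<lambda>c. (c1, c)) (rev cs)"

fun psi_aux :: "('a \<Rightarrow> 'a option) \<Rightarrow> nat \<Rightarrow> 'a list \<Rightarrow> 'a set \<Rightarrow> 'a perm" where
  "psi_aux f n [] vis = []"
| "psi_aux f n (a # rest) vis =
     (if a \<in> vis then psi_aux f n rest vis
      else (let ch = chain f n a a in cycle_swaps ch @ psi_aux f n rest (vis \<union> set ch)))"

text \<open>Psi(as, bs): close each maximal chain of the injection as!k -> bs!k into a cycle
 and decompose it.  Maximal chains start at the elements of as not in bs; they are
 processed first, then the remaining (already cyclic) components.\<close>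
definition Psi :: "'a list \<Rightarrow> 'a list \<Rightarrow> 'a perm" where
  "Psi as bs = psi_aux (map_of (zip as bs)) (length as)
      (filter (\<lambda>a. a \<notin> set bs) as @ filter (\<lambda>a. a \<in> set bs) as) {}"

fun get_var :: "('a, 'v, 'f) mterm \<Rightarrow> 'a" where
  "get_var (MVar a) = a"
| "get_var _ = undefined"

fun meta_occs :: "'a list \<Rightarrow> ('a, 'v, 'f) mterm \<Rightarrow> ('v \<times> 'a list \<times> 'a list) list" where
  "meta_occs bs (MVar a) = []"
| "meta_occs bs (MMeta Z ts) = (Z, map get_var ts, bs) # concat (map (meta_occs bs) ts)"
| "meta_occs bs (MAbs a t) = meta_occs (bs @ [a]) t"
| "meta_occs bs (MFun f t) = meta_occs bs t"
| "meta_occs bs (MTup ts) = concat (map (meta_occs bs) ts)"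

definition Phi :: "('a, 'v, 'f) mterm \<Rightarrow> 'v \<Rightarrow> 'a list" where
  "Phi t Z = (case find (\<lambda>(Z', _, _). Z' = Z) (meta_occs [] t) of
                Some (_, as, _) \<Rightarrow> as | None \<Rightarrow> [])"

text \<open>Every occurrence Z(b1..bn) becomes Psi(Phi Z, [b1..bn]).Z.  For the leftmost
 occurrence Psi(Phi Z, Phi Z) is the empty list of swappings, i.e. the occurrence
 becomes the plain unknown Z = id.Z.\<close>
fun to_nom :: "('v \<Rightarrow> 'a list) \<Rightarrow> ('a, 'v, 'f) mterm \<Rightarrow> ('a, 'v, 'f) nterm" where
  "to_nom \<Phi> (MVar a) = NAtom a"
| "to_nom \<Phi> (MMeta Z ts) = NSusp (Psi (\<Phi> Z) (map get_var ts)) Z"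
| "to_nom \<Phi> (MAbs a t) = NAbs a (to_nom \<Phi> t)"
| "to_nom \<Phi> (MFun f t) = NFun f (to_nom \<Phi> t)"
| "to_nom \<Phi> (MTup ts) = NTup (map (to_nom \<Phi>) ts)"

definition Left :: "('a, 'v, 'f) mterm \<Rightarrow> ('a, 'v) fctx \<times> ('a, 'v, 'f) nterm" where
  "Left t =
     ({(b, Z) | b Z as bs. (Z, as, bs) \<in> set (meta_occs [] t) \<and> b \<in> set bs \<and> b \<notin> set (Phi t Z)},
      to_nom (Phi t) t)"

end

theory Submission
  imports Defs
begin



lemma perm_apply_append: "perm_apply (xs @ ys) c = perm_apply xs (perm_apply ys c)"
  by (simp add: perm_apply_def)

lemma perm_apply_Cons: "perm_apply (s # xs) c = swap_atom s (perm_apply xs c)"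
  by (simp add: perm_apply_def)

lemma perm_apply_Nil[simp]: "perm_apply [] c = c"
  by (simp add: perm_apply_def)

lemma perm_fix: "(\<forall>s\<in>set xs. c \<noteq> fst s \<and> c \<noteq> snd s) \<Longrightarrow> perm_apply xs c = c"
  by (induction xs) (auto simp: perm_apply_Cons swap_atom_def)

lemma cycle_swaps_fix: "c \<notin> set xs \<Longrightarrow> perm_apply (cycle_swaps xs) c = c"
  by (cases xs) (auto intro!: perm_fix)

lemma cycle_swaps_snoc: "cycle_swaps (c1 # ds @ [d]) = (c1, d) # cycle_swaps (c1 # ds)"
  by simp

lemma cycle_swaps_main:
  "distinct (c1 # cs) \<Longrightarrow>
    perm_apply (cycle_swaps (c1 # cs)) c1 = (if cs = [] then c1 else hd cs) \<and>
    (\<forall>i < length cs. perm_apply (cycle_swaps (c1 # cs)) (cs ! i) =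
        (if Suc i < length cs then cs ! Suc i else c1))"
proof (induction cs rule: rev_induct)
  case Nil
  then show ?case by simp
next
  case (snoc d ds)
  have dist: "distinct (c1 # ds)" "d \<notin> set (c1 # ds)" using snoc.prems by auto
  note IH = snoc.IH[OF dist(1)]
  let ?p = "cycle_swaps (c1 # ds)"
  have eq: "perm_apply (cycle_swaps (c1 # ds @ [d])) c = swap_atom (c1, d) (perm_apply ?p c)" for c
    by (simp only: cycle_swaps_snoc perm_apply_Cons)
  have dfix: "perm_apply ?p d = d" using dist(2) by (intro cycle_swaps_fix) 
  show ?case
  proof (intro conjI allI impI)
    show "perm_apply (cycle_swaps (c1 # ds @ [d])) c1 = (if ds @ [d] = [] then c1 else hd (ds @ [d]))"
    proof -
      have v: "perm_apply ?p c1 = (if ds = [] then c1 else hd ds)" using IH by blast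
      show ?thesis
      proof (cases ds)
        case Nil
        then show ?thesis using v dist by (simp only: eq) (simp add: swap_atom_def perm_apply_Cons)
      next
        case (Cons x xs)
        then show ?thesis using v dist by (simp only: eq) (auto simp add: swap_atom_def perm_apply_Cons)
      qed
    qed
  next
    fix i assume i: "i < length (ds @ [d])"
    show "perm_apply (cycle_swaps (c1 # ds @ [d])) ((ds @ [d]) ! i) =
        (if Suc i < length (ds @ [d]) then (ds @ [d]) ! Suc i else c1)"
    proof (cases "i < length ds")
      case True
      have v: "perm_apply ?p (ds ! i) = (if Suc i < length ds then ds ! Suc i else c1)"
        using IH True by blast
      show ?thesis
      proof (cases "Suc i < length ds")
        case True
        have "ds ! Suc i \<noteq> c1" "ds ! Suc i \<noteq> d" using dist True nth_mem by fastforce+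
        then show ?thesis using v True \<open>i < length ds\<close> by (simp add: eq nth_append swap_atom_def perm_apply_Cons)
      next
        case False
        then have "Suc i = length ds" using \<open>i < length ds\<close> by simp
        then show ?thesis using v False \<open>i < length ds\<close> by (simp add: eq nth_append swap_atom_def perm_apply_Cons)
      qed
    next
      case False
      then have "i = length ds" using i by simp
      then show ?thesis using dfix dist by (simp add: eq nth_append swap_atom_def perm_apply_Cons)
    qed
  qed
qed

lemma cycle_swaps_nth:
  assumes "distinct xs" "i < length xs"
  shows "perm_apply (cycle_swaps xs) (xs ! i) = (if Suc i < length xs then xs ! Suc i else xs ! 0)"
proof -
  obtain c1 cs where xs: "xs = c1 # cs" using assms by (cases xs) auto
  note M = cycle_swaps_main[OF assms(1)[unfolded xs]]
  show ?thesis
  proof (cases i)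
    case 0
    then show ?thesis using M xs by (cases cs) auto
  next
    case (Suc j)
    then show ?thesis using M xs assms(2) by auto
  qed
qed




fun fpow :: "('a \<Rightarrow> 'a option) \<Rightarrow> nat \<Rightarrow> 'a \<Rightarrow> 'a option" where
  "fpow f 0 a = Some a"
| "fpow f (Suc k) a = (case f a of None \<Rightarrow> None | Some b \<Rightarrow> fpow f k b)"

lemma fpow_add: "fpow f (k + m) a = (case fpow f k a of None \<Rightarrow> None | Some b \<Rightarrow> fpow f m b)"
  by (induction k arbitrary: a) (auto split: option.splits)

lemma fpow_Suc_last: "fpow f (Suc k) a = (case fpow f k a of None \<Rightarrow> None | Some b \<Rightarrow> f b)"
  using fpow_add[of f k 1 a] by (auto split: option.splits)

lemma fpow_None_mono: "fpow f k a = None \<Longrightarrow> k \<le> m \<Longrightarrow> fpow f m a = None"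
  using fpow_add[of f k "m - k" a] by simp

lemma fpow_period: "fpow f k a = Some a \<Longrightarrow> fpow f (j * k) a = Some a"
proof (induction j)
  case 0 then show ?case by simp
next
  case (Suc j)
  then show ?case using fpow_add[of f k "j * k" a] by (simp add: add.commute)
qed

lemma chain_nonempty: "chain f n c0 c \<noteq> []"
  by (cases n) auto

lemma chain_hd: "chain f n c0 c ! 0 = c"
  by (cases n) auto

lemma chain_len: "length (chain f n c0 c) \<le> Suc n"
  by (induction n arbitrary: c) (auto split: option.splits)

lemma chain_link: "Suc i < length (chain f n c0 c) \<Longrightarrow>
   f (chain f n c0 c ! i) = Some (chain f n c0 c ! Suc i)"
proof (induction n arbitrary: c i)
  case 0 then show ?case by simp
next
  case (Suc n)
  show ?case
  proof (cases "f c")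
    case None then show ?thesis using Suc.prems by simp
  next
    case (Some d)
    show ?thesis
    proof (cases "d = c0")
      case True then show ?thesis using Suc.prems Some by simp
    next
      case False
      then have ch: "chain f (Suc n) c0 c = c # chain f n c0 d" using Some by simp
      show ?thesis
      proof (cases i)
        case 0 then show ?thesis using ch Some chain_hd[of f n c0 d] by simp
      next
        case (Suc j) then show ?thesis using ch Suc.prems Suc.IH[of j d] by simp
      qed
    qed
  qed
qed

lemma chain_notin_tl: "c0 \<notin> set (tl (chain f n c0 c))"
proof (induction n arbitrary: c)
  case 0 then show ?case by simp
next
  case (Suc n)
  then show ?case
  proof (cases "f c")
    case None then show ?thesis by simp
  next
    case (Some d)
    show ?thesis
    proof (cases "d = c0")
      case True then show ?thesis using Some by simp
    next
      case False
      obtain x xs where xs: "chain f n c0 d = x # xs"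
        using chain_nonempty[of f n c0 d] by (cases "chain f n c0 d") auto
      have "x = d" using chain_hd[of f n c0 d] xs by simp
      then show ?thesis using Some False xs Suc.IH[of d] by simp
    qed
  qed
qed

lemma chain_end: "f (last (chain f n c0 c)) = None \<or> f (last (chain f n c0 c)) = Some c0
   \<or> length (chain f n c0 c) = Suc n"
proof (induction n arbitrary: c)
  case 0 then show ?case by simp
next
  case (Suc n)
  show ?case
  proof (cases "f c")
    case None then show ?thesis by simp
  next
    case (Some d)
    show ?thesis
    proof (cases "d = c0")
      case True then show ?thesis using Some by simp
    next
      case False
      then have ch: "chain f (Suc n) c0 c = c # chain f n c0 d" using Some by simp
      have "last (chain f (Suc n) c0 c) = last (chain f n c0 d)"
        using ch chain_nonempty[of f n c0 d] by simp
      then show ?thesis using ch Suc.IH[of d] by (simp del: chain.simps)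
    qed
  qed
qed

lemma chain_fpow: "i < length (chain f n c0 c) \<Longrightarrow> fpow f i c = Some (chain f n c0 c ! i)"
proof (induction i)
  case 0 then show ?case by (simp add: chain_hd)
next
  case (Suc i)
  then show ?case using chain_link[of i f n c0 c] fpow_Suc_last[of f i c] by simp
qed

lemma links_distinct:
  assumes inj: "\<And>x y z. f x = Some z \<Longrightarrow> f y = Some z \<Longrightarrow> x = y"
    and links: "\<And>i. Suc i < length xs \<Longrightarrow> f (xs ! i) = Some (xs ! Suc i)"
    and hd: "xs ! 0 \<notin> set (tl xs)"
  shows "distinct xs"
proof -
  have "\<forall>j. i < j \<longrightarrow> j < length xs \<longrightarrow> xs ! i \<noteq> xs ! j" for i
  proof (induction i)
    case 0
    show ?case
    proof (intro allI impI)
      fix j assume "0 < j" "j < length xs"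
      then have "xs ! j \<in> set (tl xs)"
      proof -
        have "j - 1 < length (tl xs)" using \<open>0 < j\<close> \<open>j < length xs\<close> by simp
        then have "tl xs ! (j - 1) \<in> set (tl xs)" by (rule nth_mem)
        moreover have "tl xs ! (j - 1) = xs ! j" using \<open>0 < j\<close> \<open>j < length xs\<close>
          by (simp add: nth_tl)
        ultimately show ?thesis by simp
      qed
      then show "xs ! 0 \<noteq> xs ! j" using hd by auto
    qed
  next
    case (Suc i)
    show ?case
    proof (intro allI impI)
      fix j assume j: "Suc i < j" "j < length xs"
      then obtain j' where j': "j = Suc j'" by (cases j) auto
      have "f (xs ! i) = Some (xs ! Suc i)" using links j by simp
      moreover have "f (xs ! j') = Some (xs ! j)" using links j j' by simp
      ultimately show "xs ! Suc i \<noteq> xs ! j" using Suc.IH j j' inj by force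
    qed
  qed
  then show ?thesis by (metis distinct_conv_nth linorder_neqE_nat)
qed




definition good :: "('a \<Rightarrow> 'a option) \<Rightarrow> 'a perm \<Rightarrow> 'a set \<Rightarrow> bool" where
  "good f \<pi> S \<longleftrightarrow> (\<forall>c. c \<notin> S \<longrightarrow> perm_apply \<pi> c = c) \<and>
     (\<forall>c\<in>S. \<forall>d. f c = Some d \<longrightarrow> d \<in> S \<and> perm_apply \<pi> c = d)"

definition cyc :: "('a \<Rightarrow> 'a option) \<Rightarrow> 'a \<Rightarrow> bool" where
  "cyc f a \<longleftrightarrow> (\<exists>k>0. fpow f k a = Some a)"

definition closedF :: "('a \<Rightarrow> 'a option) \<Rightarrow> 'a set \<Rightarrow> bool" where
  "closedF f V \<longleftrightarrow> (\<forall>c d. c \<in> V \<longrightarrow> f c = Some d \<longrightarrow> d \<in> V)"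

definition closedB :: "('a \<Rightarrow> 'a option) \<Rightarrow> 'a set \<Rightarrow> bool" where
  "closedB f V \<longleftrightarrow> (\<forall>c d. d \<in> V \<longrightarrow> f c = Some d \<longrightarrow> c \<in> V)"

definition injopt :: "('a \<Rightarrow> 'a option) \<Rightarrow> bool" where
  "injopt f \<longleftrightarrow> (\<forall>x y z. f x = Some z \<longrightarrow> f y = Some z \<longrightarrow> x = y)"

lemma good_append:
  assumes "good f \<pi>1 S1" "good f \<pi>2 S2" "S1 \<inter> S2 = {}"
  shows "good f (\<pi>1 @ \<pi>2) (S1 \<union> S2)"
  using assms unfolding good_def perm_apply_append by (metis Un_iff disjoint_iff)

lemma ch_props:
  assumes inj0: "injopt f"
    and fin: "finite (dom f)" and card: "card (dom f) \<le> n"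
    and a: "a \<in> dom f" "a \<notin> vis" and cB: "closedB f vis"
    and ac: "a \<notin> ran f \<or> cyc f a"
  defines "ch \<equiv> chain f n a a"
  shows "set ch \<inter> vis = {} \<and> closedF f (set ch) \<and> closedB f (set ch) \<and>
         good f (cycle_swaps ch) (set ch) \<and> set ch \<subseteq> insert a (ran f)"
proof -
  have inj: "\<And>x y z. f x = Some z \<Longrightarrow> f y = Some z \<Longrightarrow> x = y"
    using inj0 unfolding injopt_def by blast
  have ne: "ch \<noteq> []" unfolding ch_def by (rule chain_nonempty)
  have h0: "ch ! 0 = a" unfolding ch_def by (rule chain_hd)
  have link: "\<And>i. Suc i < length ch \<Longrightarrow> f (ch ! i) = Some (ch ! Suc i)"
    unfolding ch_def by (rule chain_link)
  have ntl: "a \<notin> set (tl ch)" unfolding ch_def by (rule chain_notin_tl)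
  have dist: "distinct ch"
  proof (rule links_distinct[where f=f])
    show "f x = Some z \<Longrightarrow> f y = Some z \<Longrightarrow> x = y" for x y z using inj by blast
    show "Suc i < length ch \<Longrightarrow> f (ch ! i) = Some (ch ! Suc i)" for i using link by blast
    have "ch ! 0 = a" by (rule h0)
    then show "ch ! 0 \<notin> set (tl ch)" using ntl by simp
  qed
  have lastn: "last ch = ch ! (length ch - 1)" using ne by (simp add: last_conv_nth)
  have endc: "f (last ch) = None \<or> f (last ch) = Some a"
  proof -
    have "f (last ch) = None \<or> f (last ch) = Some a \<or> length ch = Suc n"
      unfolding ch_def by (rule chain_end)
    moreover have False if L: "length ch = Suc n" and d: "f (last ch) = Some d" for d
    proof -
      have "set ch \<subseteq> dom f"
      proof
        fix x assume "x \<in> set ch"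
        then obtain i where i: "i < length ch" "x = ch ! i" by (auto simp: in_set_conv_nth)
        show "x \<in> dom f"
        proof (cases "Suc i < length ch")
          case True then show ?thesis using link i by auto
        next
          case False then have "i = length ch - 1" using i by simp
          then show ?thesis using d i lastn by auto
        qed
      qed
      then have "card (set ch) \<le> card (dom f)" using fin by (rule card_mono[rotated])
      moreover have "card (set ch) = Suc n" using dist L by (simp add: distinct_card)
      ultimately show False using card by simp
    qed
    ultimately show ?thesis by (cases "f (last ch)") auto
  qed
  have disj: "set ch \<inter> vis = {}"
  proof -
    have "i < length ch \<Longrightarrow> ch ! i \<notin> vis" for i
    proof (induction i)
      case 0 then show ?case using h0 a by simp
    next
      case (Suc i)
      then have "ch ! i \<notin> vis" by simp
      moreover have "f (ch ! i) = Some (ch ! Suc i)" using link Suc.prems by blast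
      ultimately show ?case using cB unfolding closedB_def by blast
    qed
    then show ?thesis by (metis disjoint_iff in_set_conv_nth)
  qed
  have cF: "closedF f (set ch)"
    unfolding closedF_def
  proof (intro allI impI)
    fix c d assume c: "c \<in> set ch" and fc: "f c = Some d"
    then obtain i where i: "i < length ch" "c = ch ! i" by (auto simp: in_set_conv_nth)
    show "d \<in> set ch"
    proof (cases "Suc i < length ch")
      case True then show ?thesis using link[OF True] i fc by auto
    next
      case False then have "i = length ch - 1" using i by simp
      then have "c = last ch" using i lastn by simp
      then have "d = a" using endc fc by auto
      moreover have "ch ! 0 \<in> set ch" using ne by (intro nth_mem) simp
      ultimately show ?thesis using h0 by simp
    qed
  qed
  have cycNone: False if cy: "cyc f a" and ln: "f (last ch) = None"
  proof -
    obtain k where k: "k > 0" "fpow f k a = Some a" using cy unfolding cyc_def by blast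
    have fp: "i < length ch \<Longrightarrow> fpow f i a = Some (ch ! i)" for i
      unfolding ch_def by (rule chain_fpow)
    obtain m where m: "length ch = Suc m" using ne by (cases ch) auto
    have "m < length ch" using m by simp
    then have "fpow f m a = Some (ch ! m)" by (rule fp)
    moreover have "ch ! m = last ch" using lastn m by simp
    ultimately have fm: "fpow f m a = Some (last ch)" by simp
    have "fpow f (Suc m) a = (case fpow f m a of None \<Rightarrow> None | Some b \<Rightarrow> f b)"
      by (rule fpow_Suc_last)
    also have "\<dots> = None" using fm ln by simp
    finally have fS: "fpow f (Suc m) a = None" .
    have le: "Suc m \<le> length ch * k" using k(1) m by (metis One_nat_def Suc_leI mult_le_mono2 mult.right_neutral)
    have "fpow f (length ch * k) a = None" by (rule fpow_None_mono[OF fS le])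
    moreover have "fpow f (length ch * k) a = Some a" using fpow_period[OF k(2)] .
    ultimately show False by simp
  qed
  have cB2: "closedB f (set ch)"
    unfolding closedB_def
  proof (intro allI impI)
    fix c d assume d: "d \<in> set ch" and fc: "f c = Some d"
    then obtain i where i: "i < length ch" "d = ch ! i" by (auto simp: in_set_conv_nth)
    show "c \<in> set ch"
    proof (cases i)
      case (Suc j)
      then have "f (ch ! j) = Some d" using link[of j] i by simp
      then have "c = ch ! j" using inj fc by blast
      then show ?thesis using i Suc by simp
    next
      case 0
      then have "d = a" using h0 i by simp
      then have "a \<in> ran f" using fc by (auto simp: ran_def)
      then have "cyc f a" using ac by blast
      then have "f (last ch) = Some a" using endc cycNone by blast
      then have "c = last ch" using inj fc \<open>d = a\<close> by blast
      then show ?thesis using ne by simp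
    qed
  qed
  have gd: "good f (cycle_swaps ch) (set ch)"
    unfolding good_def
  proof (intro conjI allI impI ballI)
    fix c assume "c \<notin> set ch" then show "perm_apply (cycle_swaps ch) c = c" by (rule cycle_swaps_fix)
  next
    fix c d assume c: "c \<in> set ch" and fc: "f c = Some d"
    then show "d \<in> set ch" using cF unfolding closedF_def by blast
    obtain i where i: "i < length ch" "c = ch ! i" using c by (auto simp: in_set_conv_nth)
    note P = cycle_swaps_nth[OF dist i(1)]
    show "perm_apply (cycle_swaps ch) c = d"
    proof (cases "Suc i < length ch")
      case True then show ?thesis using P link[OF True] i fc by simp
    next
      case False then have "i = length ch - 1" using i by simp
      then have "c = last ch" using i lastn by simp
      then have "d = a" using endc fc by auto
      then show ?thesis using P False i h0 by simp
    qed
  qed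
  have sub: "set ch \<subseteq> insert a (ran f)"
  proof
    fix x assume "x \<in> set ch"
    then obtain i where i: "i < length ch" "x = ch ! i" by (auto simp: in_set_conv_nth)
    show "x \<in> insert a (ran f)"
    proof (cases i)
      case 0 then show ?thesis using i h0 by simp
    next
      case (Suc j) then show ?thesis using link[of j] i by (auto simp: ran_def)
    qed
  qed
  show ?thesis using disj cF cB2 gd sub by blast
qed




fun vis_after :: "('a \<Rightarrow> 'a option) \<Rightarrow> nat \<Rightarrow> 'a list \<Rightarrow> 'a set \<Rightarrow> 'a set" where
  "vis_after f n [] vis = vis"
| "vis_after f n (a # rest) vis =
     (if a \<in> vis then vis_after f n rest vis else vis_after f n rest (vis \<union> set (chain f n a a)))"

lemma psi_aux_append:
  "psi_aux f n (L1 @ L2) vis = psi_aux f n L1 vis @ psi_aux f n L2 (vis_after f n L1 vis)"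
  by (induction L1 arbitrary: vis) (auto simp: Let_def)

lemma psi_main:
  assumes inj: "injopt f"
    and fin: "finite (dom f)" and card: "card (dom f) \<le> n"
  shows "closedF f vis \<Longrightarrow> closedB f vis \<Longrightarrow>
    \<forall>a\<in>set L. a \<in> dom f \<and> (a \<notin> vis \<longrightarrow> (a \<notin> ran f \<or> cyc f a)) \<Longrightarrow>
    good f (psi_aux f n L vis) (vis_after f n L vis - vis) \<and> vis \<subseteq> vis_after f n L vis \<and>
    set L \<subseteq> vis_after f n L vis \<and> closedF f (vis_after f n L vis) \<and>
    closedB f (vis_after f n L vis) \<and> vis_after f n L vis \<subseteq> vis \<union> dom f \<union> ran f"
proof (induction L arbitrary: vis)
  case Nil
  then show ?case by (auto simp: good_def)
next
  case (Cons a rest)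
  show ?case
  proof (cases "a \<in> vis")
    case True
    have h: "\<forall>a\<in>set rest. a \<in> dom f \<and> (a \<notin> vis \<longrightarrow> (a \<notin> ran f \<or> cyc f a))"
      using Cons.prems(3) by simp
    note IH = Cons.IH[OF Cons.prems(1,2) h]
    then show ?thesis using True by auto
  next
    case False
    define ch where "ch = chain f n a a"
    have adom: "a \<in> dom f" and ac: "a \<notin> ran f \<or> cyc f a" using Cons.prems(3) False by auto
    note CP = ch_props[OF inj fin card adom False Cons.prems(2) ac, folded ch_def]
    define vis2 where "vis2 = vis \<union> set ch"
    have c1: "closedF f vis2" using CP Cons.prems(1) unfolding vis2_def closedF_def by blast
    have c2: "closedB f vis2" using CP Cons.prems(2) unfolding vis2_def closedB_def by blast
    have h: "\<forall>a\<in>set rest. a \<in> dom f \<and> (a \<notin> vis2 \<longrightarrow> (a \<notin> ran f \<or> cyc f a))"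
      using Cons.prems(3) unfolding vis2_def by auto
    note IH = Cons.IH[OF c1 c2 h]
    define V where "V = vis_after f n rest vis2"
    have V: "vis_after f n (a # rest) vis = V" using False by (simp add: V_def vis2_def ch_def)
    have P: "psi_aux f n (a # rest) vis = cycle_swaps ch @ psi_aux f n rest vis2"
      using False by (simp add: Let_def vis2_def ch_def)
    have ne: "ch \<noteq> []" unfolding ch_def by (rule chain_nonempty)
    have ach: "a \<in> set ch" using chain_hd[of f n a a] ne unfolding ch_def[symmetric]
      by (metis length_greater_0_conv nth_mem)
    have g: "good f (cycle_swaps ch @ psi_aux f n rest vis2) (set ch \<union> (V - vis2))"
      by (rule good_append) (use CP IH in \<open>auto simp: V_def vis2_def\<close>)
    have eqS: "set ch \<union> (V - vis2) = V - vis"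
      using CP IH unfolding V_def vis2_def by blast
    show ?thesis unfolding V P using g eqS IH CP ach adom unfolding V_def vis2_def by auto
  qed
qed




lemma fpow_closed: "closedF f V \<Longrightarrow> x \<in> V \<Longrightarrow> fpow f k x = Some y \<Longrightarrow> y \<in> V"
proof (induction k arbitrary: x)
  case 0 then show ?case by simp
next
  case (Suc k)
  then show ?case unfolding closedF_def by (auto split: option.splits)
qed

lemma cyc_lemma:
  assumes fin: "finite (dom f)" and cF: "closedF f V" and sub: "dom f - ran f \<subseteq> V"
    and a: "a \<in> dom f" "a \<notin> V"
  shows "cyc f a"
proof -
  define P where "P = {x \<in> dom f. \<exists>k. fpow f k x = Some a}"
  define h where "h = (\<lambda>p. the (f p))"
  have finP: "finite P" using fin unfolding P_def by simp
  have aP: "a \<in> P" unfolding P_def using a by (auto intro: exI[of _ 0])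
  have "P \<subseteq> h ` P"
  proof
    fix x assume x: "x \<in> P"
    then obtain k where k: "fpow f k x = Some a" and xd: "x \<in> dom f" unfolding P_def by blast
    have "x \<notin> V" using fpow_closed[OF cF _ k] a(2) by blast
    then have "x \<in> ran f" using xd sub by blast
    then obtain p where p: "f p = Some x" by (auto simp: ran_def)
    have "fpow f (Suc k) p = Some a" using p k by simp
    then have "p \<in> P" using p unfolding P_def by blast
    moreover have "h p = x" using p unfolding h_def by simp
    ultimately show "x \<in> h ` P" by blast
  qed
  moreover have "card (h ` P) \<le> card P" by (rule card_image_le[OF finP])
  moreover have "finite (h ` P)" using finP by simp
  ultimately have "P = h ` P" by (metis card_seteq)
  then have "h a \<in> P" using aP by blast
  then obtain k where k: "fpow f k (h a) = Some a" unfolding P_def by blast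
  obtain b where b: "f a = Some b" using a(1) by auto
  then have "h a = b" unfolding h_def by simp
  then have "fpow f (Suc k) a = Some a" using k b by simp
  then show ?thesis unfolding cyc_def by blast
qed

lemma Psi_correct:
  assumes das: "distinct as" and dbs: "distinct bs" and len: "length as = length bs"
  shows "(\<forall>i<length as. perm_apply (Psi as bs) (as ! i) = bs ! i) \<and>
         (\<forall>c. c \<notin> set as \<longrightarrow> c \<notin> set bs \<longrightarrow> perm_apply (Psi as bs) c = c)"
proof -
  define f where "f = map_of (zip as bs)"
  define n where "n = length as"
  define L1 where "L1 = filter (\<lambda>a. a \<notin> set bs) as"
  define L2 where "L2 = filter (\<lambda>a. a \<in> set bs) as"
  have domf: "dom f = set as" unfolding f_def using len by simp
  have ranf: "ran f = set bs" unfolding f_def using len das by (rule ran_map_of_zip)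
  have fnth: "i < length as \<Longrightarrow> f (as ! i) = Some (bs ! i)" for i
    unfolding f_def using map_of_zip_nth[OF len das] len by simp
  have inj: "injopt f" unfolding injopt_def
  proof (intro allI impI)
    fix x y z assume "f x = Some z" "f y = Some z"
    then have "(x, z) \<in> set (zip as bs)" "(y, z) \<in> set (zip as bs)"
      unfolding f_def by (auto dest: map_of_SomeD)
    then obtain i j where ij: "i < length as" "x = as ! i" "z = bs ! i"
        "j < length as" "y = as ! j" "z = bs ! j"
      using len by (auto simp: set_zip)
    then have "i = j" using dbs len by (metis nth_eq_iff_index_eq)
    then show "x = y" using ij by simp
  qed
  have fin: "finite (dom f)" using domf by simp
  have card: "card (dom f) \<le> n" unfolding domf n_def by (rule card_length)
  have PsiEq: "Psi as bs = psi_aux f n L1 {} @ psi_aux f n L2 (vis_after f n L1 {})"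
    unfolding Psi_def f_def n_def L1_def L2_def by (rule psi_aux_append)
  define V1 where "V1 = vis_after f n L1 {}"
  have h1: "\<forall>a\<in>set L1. a \<in> dom f \<and> (a \<notin> {} \<longrightarrow> (a \<notin> ran f \<or> cyc f a))"
    unfolding L1_def domf ranf by auto
  note M1 = psi_main[OF inj fin card _ _ h1, folded V1_def]
  have cF0: "closedF f {}" "closedB f {}" unfolding closedF_def closedB_def by auto
  note M1 = M1[OF cF0]
  have subV1: "dom f - ran f \<subseteq> V1" using M1 unfolding domf ranf L1_def by auto
  have h2: "\<forall>a\<in>set L2. a \<in> dom f \<and> (a \<notin> V1 \<longrightarrow> (a \<notin> ran f \<or> cyc f a))"
  proof
    fix a assume "a \<in> set L2"
    then have ad: "a \<in> dom f" unfolding L2_def domf by auto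
    have "a \<notin> V1 \<Longrightarrow> cyc f a" using cyc_lemma[OF fin _ subV1 ad] M1 by blast
    then show "a \<in> dom f \<and> (a \<notin> V1 \<longrightarrow> (a \<notin> ran f \<or> cyc f a))" using ad by blast
  qed
  define V2 where "V2 = vis_after f n L2 V1"
  note M2 = psi_main[OF inj fin card _ _ h2, folded V2_def]
  have cV1: "closedF f V1" "closedB f V1" using M1 by auto
  note M2 = M2[OF cV1]
  have g: "good f (Psi as bs) ((V1 - {}) \<union> (V2 - V1))"
    unfolding PsiEq V1_def[symmetric] by (rule good_append) (use M1 M2 in auto)
  have eqV: "(V1 - {}) \<union> (V2 - V1) = V2" using M2 by auto
  have asV: "set as \<subseteq> V2" using M1 M2 unfolding L1_def L2_def by auto
  have Vsub: "V2 \<subseteq> set as \<union> set bs" using M1 M2 domf ranf by auto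
  show ?thesis
  proof (intro conjI allI impI)
    fix i assume i: "i < length as"
    then show "perm_apply (Psi as bs) (as ! i) = bs ! i"
      using g eqV asV fnth[OF i] unfolding good_def by (metis nth_mem subsetD)
  next
    fix c assume "c \<notin> set as" "c \<notin> set bs"
    then show "perm_apply (Psi as bs) c = c" using g eqV Vsub unfolding good_def by blast
  qed
qed




lemma susp_to_nom: "meta_ok ar t \<Longrightarrow>
  susp_occs bs (to_nom \<Phi> t) = map (\<lambda>(Z, xs, B). (Psi (\<Phi> Z) xs, Z, B)) (meta_occs bs t)"
proof (induction t arbitrary: bs)
  case (MMeta Z ts)
  then obtain as where "ts = map MVar as" by auto
  then show ?case by simp
next
  case (MTup ts)
  have "map (\<lambda>x. susp_occs bs (to_nom \<Phi> x)) ts =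
        map (\<lambda>x. map (\<lambda>(Z, xs, B). (Psi (\<Phi> Z) xs, Z, B)) (meta_occs bs x)) ts"
    by (rule map_cong) (use MTup in auto)
  then show ?case by (simp only: to_nom.simps susp_occs.simps meta_occs.simps map_map comp_def map_concat)
qed auto

lemma atom_to_nom: "(a, B) \<in> set (atom_occs bs (to_nom \<Phi> t)) \<Longrightarrow>
  set bs \<subseteq> set B \<and> (a \<in> set B \<or> a \<in> fvm t)"
proof (induction t arbitrary: bs)
  case (MAbs x t)
  then show ?case by fastforce
next
  case (MTup ts)
  then show ?case by fastforce
qed auto

lemma meta_props: "meta_ok ar t \<Longrightarrow> (Z, xs, B) \<in> set (meta_occs bs t) \<Longrightarrow>
  set bs \<subseteq> set B \<and> distinct xs \<and> length xs = ar Z \<and> (\<forall>x\<in>set xs. x \<in> set B \<or> x \<in> fvm t)"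
proof (induction t arbitrary: bs)
  case (MMeta Z' ts)
  then obtain as where as: "ts = map MVar as" "distinct as" "length as = ar Z'" by auto
  have "map get_var ts = as" using as(1) by (simp add: comp_def)
  moreover have "concat (map (meta_occs bs) ts) = []" using as(1) by simp
  moreover have "fvm (MMeta Z' ts) = set as" using as(1) by auto
  ultimately show ?case using MMeta.prems as by auto
next
  case (MAbs x t)
  then show ?case by fastforce
next
  case (MTup ts)
  then show ?case by fastforce
qed auto

theorem mainTheorem12:
  fixes t :: "('a, 'v, 'f) mterm" and ar :: "'v \<Rightarrow> nat"
    and \<Delta> :: "('a, 'v) fctx" and t' :: "('a, 'v, 'f) nterm"
  assumes "crs_lhs ar t"
    and "barendregt t"
    and "Left t = (\<Delta>, t')"
  shows "closed_nom \<Delta> t'"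
proof -
  have fv: "fvm t = {}" and mo: "meta_ok ar t" using assms(1) unfolding crs_lhs_def by auto
  define Occ where "Occ = meta_occs [] t"
  have D: "\<Delta> = {(b, Z) | b Z as bs. (Z, as, bs) \<in> set Occ \<and> b \<in> set bs \<and> b \<notin> set (Phi t Z)}"
    and t': "t' = to_nom (Phi t) t" using assms(3) unfolding Left_def Occ_def by auto
  have occ: "(Z, xs, B) \<in> set Occ \<Longrightarrow> distinct xs \<and> length xs = ar Z \<and> set xs \<subseteq> set B" for Z xs B
    using meta_props[OF mo, of Z xs B "[]"] fv unfolding Occ_def by auto
  have phi: "(Z, xs, B) \<in> set Occ \<Longrightarrow> distinct (Phi t Z) \<and> length (Phi t Z) = ar Z" for Z xs B
  proof -
    assume z: "(Z, xs, B) \<in> set Occ"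
    then obtain p where p: "find (\<lambda>(Z', _, _). Z' = Z) Occ = Some p"
      by (cases "find (\<lambda>(Z', _, _). Z' = Z) Occ") (auto simp: find_None_iff)
    then obtain xs0 B0 where "p = (Z, xs0, B0)" "(Z, xs0, B0) \<in> set Occ"
      by (auto simp: find_Some_iff) (metis nth_mem)
    moreover have "Phi t Z = xs0" using p calculation(1) unfolding Phi_def Occ_def[symmetric] by simp
    ultimately show ?thesis using occ by blast
  qed
  have PC: "(Z, xs, B) \<in> set Occ \<Longrightarrow>
     (\<forall>i<length (Phi t Z). perm_apply (Psi (Phi t Z) xs) (Phi t Z ! i) = xs ! i) \<and>
     (\<forall>c. c \<notin> set (Phi t Z) \<longrightarrow> c \<notin> set xs \<longrightarrow> perm_apply (Psi (Phi t Z) xs) c = c)" for Z xs B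
    using Psi_correct[of "Phi t Z" xs] occ[of Z xs B] phi[of Z xs B] by auto
  have K1: "(Z, xs, B) \<in> set Occ \<Longrightarrow> a \<in> set (Phi t Z) \<Longrightarrow> perm_apply (Psi (Phi t Z) xs) a \<in> set B"
    for Z xs B a
  proof -
    assume z: "(Z, xs, B) \<in> set Occ" and a: "a \<in> set (Phi t Z)"
    then obtain i where i: "i < length (Phi t Z)" "a = Phi t Z ! i" by (auto simp: in_set_conv_nth)
    have "length xs = length (Phi t Z)" using occ[OF z] phi[OF z] by simp
    then have "xs ! i \<in> set xs" using i by simp
    then show ?thesis using PC[OF z] i occ[OF z] by auto
  qed
  have K2: "(Z, xs, B) \<in> set Occ \<Longrightarrow> a \<notin> set (Phi t Z) \<Longrightarrow>
      perm_apply (Psi (Phi t Z) xs) a \<noteq> a \<or> perm_apply (Psi (Phi t Z) xs) a \<in> set B \<Longrightarrow> a \<in> set B"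
    for Z xs B a
    using PC[of Z xs B] occ[of Z xs B] by (cases "a \<in> set xs") auto
  have Din: "(Z, xs, B) \<in> set Occ \<Longrightarrow> a \<in> set B \<Longrightarrow> a \<notin> set (Phi t Z) \<Longrightarrow> (a, Z) \<in> \<Delta>"
    for Z xs B a unfolding D by blast
  have S: "susp_occs [] t' = map (\<lambda>(Z, xs, B). (Psi (Phi t Z) xs, Z, B)) Occ"
    unfolding t' Occ_def by (rule susp_to_nom[OF mo])
  have C1: "\<forall>(a, bs) \<in> set (atom_occs [] t'). a \<in> set bs"
    using atom_to_nom[of _ _ "[]" "Phi t" t] fv unfolding t' by auto
  have C2: "perm_apply (Psi (Phi t Z) xs') a \<in> set B'
            \<or> (a, Z) \<in> \<Delta>"
    if "(Z, xs, B) \<in> set Occ" "(Z, xs', B') \<in> set Occ" "perm_apply (Psi (Phi t Z) xs) a \<in> set B"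
    for Z xs B xs' B' a
    using that K1 K2 Din by blast
  have C3: "(a, Z) \<in> \<Delta>"
    if "(Z, xs1, B1) \<in> set Occ" "(Z, xs2, B2) \<in> set Occ"
       "perm_apply (Psi (Phi t Z) xs1) a \<noteq> perm_apply (Psi (Phi t Z) xs2) a"
       "perm_apply (Psi (Phi t Z) xs1) a \<notin> set B1 \<or> perm_apply (Psi (Phi t Z) xs2) a \<notin> set B2"
    for Z xs1 B1 xs2 B2 a
  proof (cases "a \<in> set (Phi t Z)")
    case True
    then show ?thesis using that K1 by blast
  next
    case False
    then show ?thesis using that K2 Din by metis
  qed
  show ?thesis
    unfolding closed_nom_def S
    using C1 C2 C3 by fastforce
qed


end
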